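(* Let $\sigma:\mathbb{R}^d\to\mathbb{R}^{d\times m}$ and $b:\mathbb{R}^d\to\mathbb{R}^d$ be bounded continuous functions and assume there exist constants $C>0$ and $\mu>0$ such that for every integer $N>e$ and all $x,y\in\mathbb{R}^d$ with $|x|,|y|\le N$, $$\|\sigma(x)-\sigma(y)\|\le C\sqrt{\log N}\,|x-y|+C\frac{\log N}{N^{\mu}},\qquad |b(x)-b(y)|\le C\log N\,|x-y|+C\frac{\log N}{N^{\mu}}.$$ Fix $x\in\mathbb{R}^d$ and $T>0$. For $h\in C_0([0,T],\mathbb{R}^m)$ with $e(h)<+\infty$, let $X_h$ be the unique solution of the ODE $\dot X_h(t)=\sigma(X_h(t))\dot h(t)+b(X_h(t))$, $X_h(0)=x$, and let $X_h^n$ be the solution of $\dot X^n_h(t)=\sigma(X^n_h(\phi_n(t)))\dot h(t)+b(X^n_h(\phi_n(t)))$, $X^n_h(0)=x$, where $\phi_n(t)=k2^{-n}$ for $t\in[k2^{-n},(k+1)2^{-n})$. Then for any $\alpha>0$, $$\lim_{n\to+\infty}\sup_{\{h:\,e(h)\le\alpha\}}\Big(\sup_{0\le t\le T}|X^n_h(t)-X_h(t)|\Big)=0.$$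
   Context: $C_0([0,T],\mathbb{R}^m)$ is the space of continuous functions $[0,T]\to\mathbb{R}^m$ vanishing at $0$. For $g\in C_0([0,T],\mathbb{R}^m)$, $e(g)=\int_0^T|\dot g(t)|^2dt$ if $g$ is absolutely continuous and $e(g)=+\infty$ otherwise. $|\cdot|$ is the Euclidean norm and $\|\sigma\|^2=\sum_{i,j}\sigma_{ij}^2$. *)

theory Defs
  imports "HOL-Analysis.Analysis"
begin

definition abs_continuous_on :: "real \<Rightarrow> real \<Rightarrow> (real \<Rightarrow> 'a::real_normed_vector) \<Rightarrow> bool" where
  "abs_continuous_on a b f \<longleftrightarrow>
     (\<forall>\<epsilon>>0. \<exists>\<delta>>0. \<forall>n::nat. \<forall>s t :: nat \<Rightarrow> real.
        (\<forall>i<n. a \<le> s i \<and> s i \<le> t i \<and> t i \<le> b) \<longrightarrow>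
        (\<forall>i<n. \<forall>j<n. i \<noteq> j \<longrightarrow> t i \<le> s j \<or> t j \<le> s i) \<longrightarrow>
        (\<Sum>i<n. t i - s i) < \<delta> \<longrightarrow>
        (\<Sum>i<n. norm (f (t i) - f (s i))) < \<epsilon>)"

definition C0 :: "real \<Rightarrow> (real \<Rightarrow> 'a::real_normed_vector) \<Rightarrow> bool" where
  "C0 T h \<longleftrightarrow> continuous_on {0..T} h \<and> h 0 = 0"

text \<open>Derivative of h (exists almost everywhere on [0,T] when h is absolutely continuous).\<close>
definition hdot :: "real \<Rightarrow> (real \<Rightarrow> 'a::real_normed_vector) \<Rightarrow> real \<Rightarrow> 'a" where
  "hdot T h t = vector_derivative h (at t within {0..T})"

definition energy :: "real \<Rightarrow> (real \<Rightarrow> 'a::real_normed_vector) \<Rightarrow> ennreal" where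
  "energy T h = (if abs_continuous_on 0 T h
      then (\<integral>\<^sup>+ t. ennreal ((norm (hdot T h t))\<^sup>2) \<partial>(lebesgue_on {0..T}))
      else \<infinity>)"

definition phi :: "nat \<Rightarrow> real \<Rightarrow> real" where
  "phi n t = real_of_int \<lfloor>t * 2 ^ n\<rfloor> / 2 ^ n"

text \<open>X solves X' = sigma(X) h' + b(X), X(0) = x on [0,T] (integral / Caratheodory sense).\<close>
definition solves_ode ::
  "(real^'d \<Rightarrow> real^'m^'d) \<Rightarrow> (real^'d \<Rightarrow> real^'d) \<Rightarrow> real^'d \<Rightarrow> real
    \<Rightarrow> (real \<Rightarrow> real^'m) \<Rightarrow> (real \<Rightarrow> real^'d) \<Rightarrow> bool" where
  "solves_ode \<sigma> b x T h X \<longleftrightarrow>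
     (\<forall>t\<in>{0..T}. ((\<lambda>s. \<sigma> (X s) *v hdot T h s + b (X s)) has_integral (X t - x)) {0..t})"

definition solves_euler ::
  "(real^'d \<Rightarrow> real^'m^'d) \<Rightarrow> (real^'d \<Rightarrow> real^'d) \<Rightarrow> real^'d \<Rightarrow> real \<Rightarrow> nat
    \<Rightarrow> (real \<Rightarrow> real^'m) \<Rightarrow> (real \<Rightarrow> real^'d) \<Rightarrow> bool" where
  "solves_euler \<sigma> b x T n h Y \<longleftrightarrow>
     (\<forall>t\<in>{0..T}. ((\<lambda>s. \<sigma> (Y (phi n s)) *v hdot T h s + b (Y (phi n s))) has_integral (Y t - x)) {0..t})"

end

theory Submission
  imports Defs
begin


lemma quot_aux:
  fixes f :: "real \<Rightarrow> 'a::real_normed_vector"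
  assumes "y \<noteq> t"
  shows "(f y - f t) /\<^sub>R (y - t) - v = (1 / (y - t)) *\<^sub>R (f y - (f t + (y - t) *\<^sub>R v))"
proof -
  have "(1 / (y - t)) *\<^sub>R (f y - (f t + (y - t) *\<^sub>R v)) = (1/(y-t)) *\<^sub>R (f y - f t) - (1/(y-t)) *\<^sub>R ((y-t) *\<^sub>R v)"
    by (simp add: algebra_simps)
  also have "(1/(y-t)) *\<^sub>R ((y-t) *\<^sub>R v) = v" using assms by simp
  finally show ?thesis by (simp add: divide_inverse_commute)
qed

lemma vd_quot:
  fixes f :: "real \<Rightarrow> 'a::real_normed_vector"
  assumes "((\<lambda>y. (f y - f t) /\<^sub>R (y - t)) \<longlongrightarrow> v) (at t within S)"
  shows "(f has_vector_derivative v) (at t within S)"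
proof -
  have "((\<lambda>y. (f y - f t) /\<^sub>R (y - t) - v) \<longlongrightarrow> 0) (at t within S)"
    using tendsto_diff[OF assms tendsto_const[of v]] by simp
  then have "((\<lambda>y. norm ((f y - f t) /\<^sub>R (y - t) - v)) \<longlongrightarrow> 0) (at t within S)"
    using tendsto_norm_zero by blast
  moreover have "\<forall>\<^sub>F y in at t within S. norm ((f y - f t) /\<^sub>R (y - t) - v)
      = norm ((1 / norm (y - t)) *\<^sub>R (f y - (f t + (y - t) *\<^sub>R v)))"
  proof (rule eventually_at_filter[THEN iffD2], intro always_eventually allI impI)
    fix y assume "y \<noteq> t"
    then have "(f y - f t) /\<^sub>R (y - t) - v = (1 / (y - t)) *\<^sub>R (f y - (f t + (y - t) *\<^sub>R v))"
      by (rule quot_aux)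
    then show "norm ((f y - f t) /\<^sub>R (y - t) - v) = norm ((1 / norm (y - t)) *\<^sub>R (f y - (f t + (y - t) *\<^sub>R v)))"
      by simp
  qed
  ultimately have "((\<lambda>y. norm ((1 / norm (y - t)) *\<^sub>R (f y - (f t + (y - t) *\<^sub>R v)))) \<longlongrightarrow> 0) (at t within S)"
    using tendsto_cong by fastforce
  then have "((\<lambda>y. (1 / norm (y - t)) *\<^sub>R (f y - (f t + (y - t) *\<^sub>R v))) \<longlongrightarrow> 0) (at t within S)"
    using tendsto_norm_zero_iff by blast
  then show ?thesis
    unfolding has_vector_derivative_def has_derivative_within
    by (simp add: bounded_linear_scaleR_left)
qed

lemma vd_quot2:
  fixes f :: "real \<Rightarrow> 'a::real_normed_vector"
  assumes "(f has_vector_derivative v) (at t within S)"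
  shows "((\<lambda>y. (f y - f t) /\<^sub>R (y - t)) \<longlongrightarrow> v) (at t within S)"
proof -
  have "((\<lambda>y. (1 / norm (y - t)) *\<^sub>R (f y - (f t + (y - t) *\<^sub>R v))) \<longlongrightarrow> 0) (at t within S)"
    using assms unfolding has_vector_derivative_def has_derivative_within by simp
  then have "((\<lambda>y. norm ((1 / norm (y - t)) *\<^sub>R (f y - (f t + (y - t) *\<^sub>R v)))) \<longlongrightarrow> 0) (at t within S)"
    using tendsto_norm_zero by blast
  moreover have "\<forall>\<^sub>F y in at t within S. norm ((1 / norm (y - t)) *\<^sub>R (f y - (f t + (y - t) *\<^sub>R v)))
      = norm ((f y - f t) /\<^sub>R (y - t) - v)"
  proof (rule eventually_at_filter[THEN iffD2], intro always_eventually allI impI)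
    fix y assume "y \<noteq> t"
    then have "(f y - f t) /\<^sub>R (y - t) - v = (1 / (y - t)) *\<^sub>R (f y - (f t + (y - t) *\<^sub>R v))"
      by (rule quot_aux)
    then show "norm ((1 / norm (y - t)) *\<^sub>R (f y - (f t + (y - t) *\<^sub>R v))) = norm ((f y - f t) /\<^sub>R (y - t) - v)"
      by simp
  qed
  ultimately have "((\<lambda>y. norm ((f y - f t) /\<^sub>R (y - t) - v)) \<longlongrightarrow> 0) (at t within S)"
    using tendsto_cong by fastforce
  then have "((\<lambda>y. (f y - f t) /\<^sub>R (y - t) - v) \<longlongrightarrow> 0) (at t within S)"
    using tendsto_norm_zero_iff by blast
  from tendsto_add[OF this tendsto_const[of v]] show ?thesis by simp
qed

lemma closed_E:
  fixes h :: "real \<Rightarrow> 'a::real_normed_vector"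
  assumes hc: "continuous_on {0..T} h"
  shows "closed {t\<in>{0..T}. \<forall>y\<in>{0..T}. \<forall>y'\<in>{0..T}. (0 < \<bar>y - t\<bar> \<and> \<bar>y - t\<bar> < r \<and> 0 < \<bar>y' - t\<bar> \<and> \<bar>y' - t\<bar> < r)
      \<longrightarrow> dist ((h y - h t) /\<^sub>R (y - t)) ((h y' - h t) /\<^sub>R (y' - t)) \<le> e}" (is "closed ?E")
proof (rule closed_sequential_limits[THEN iffD2], intro allI impI, elim conjE)
  fix z l assume zE: "\<forall>n. z n \<in> ?E" and zl: "z \<longlonglongrightarrow> l"
  have zS: "z n \<in> {0..T}" for n using zE by auto
  have lS: "l \<in> {0..T}"
    using closed_sequentially[OF closed_atLeastAtMost zS zl] by blast
  have hz: "(\<lambda>n. h (z n)) \<longlonglongrightarrow> h l"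
    using hc lS zS zl unfolding continuous_on_sequentially comp_def by blast
  show "l \<in> ?E"
  proof (simp only: mem_Collect_eq, intro conjI lS ballI impI, elim conjE)
    fix y y' assume yS: "y \<in> {0..T}" and y'S: "y' \<in> {0..T}"
      and 1: "0 < \<bar>y - l\<bar>" and 2: "\<bar>y - l\<bar> < r" and 3: "0 < \<bar>y' - l\<bar>" and 4: "\<bar>y' - l\<bar> < r"
    have q: "(\<lambda>n. (h w - h (z n)) /\<^sub>R (w - z n)) \<longlonglongrightarrow> (h w - h l) /\<^sub>R (w - l)" if "w \<noteq> l" for w
      using that by (intro tendsto_intros hz zl) auto
    have ty: "(\<lambda>n. \<bar>y - z n\<bar>) \<longlonglongrightarrow> \<bar>y - l\<bar>" and ty': "(\<lambda>n. \<bar>y' - z n\<bar>) \<longlonglongrightarrow> \<bar>y' - l\<bar>"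
      by (intro tendsto_intros zl)+
    have ev: "\<forall>\<^sub>F n in sequentially. 0 < \<bar>y - z n\<bar> \<and> \<bar>y - z n\<bar> < r \<and> 0 < \<bar>y' - z n\<bar> \<and> \<bar>y' - z n\<bar> < r"
      using order_tendstoD(1)[OF ty 1] order_tendstoD(2)[OF ty 2] order_tendstoD(1)[OF ty' 3] order_tendstoD(2)[OF ty' 4]
      by eventually_elim auto
    have "\<forall>\<^sub>F n in sequentially. dist ((h y - h (z n)) /\<^sub>R (y - z n)) ((h y' - h (z n)) /\<^sub>R (y' - z n)) \<le> e"
      using ev
    proof eventually_elim
      case (elim n)
      have "z n \<in> ?E" using zE by blast
      then show ?case using yS y'S elim by auto
    qed
    moreover have "(\<lambda>n. dist ((h y - h (z n)) /\<^sub>R (y - z n)) ((h y' - h (z n)) /\<^sub>R (y' - z n)))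
        \<longlonglongrightarrow> dist ((h y - h l) /\<^sub>R (y - l)) ((h y' - h l) /\<^sub>R (y' - l))"
      using 1 3 by (intro tendsto_dist q) auto
    ultimately show "dist ((h y - h l) /\<^sub>R (y - l)) ((h y' - h l) /\<^sub>R (y' - l)) \<le> e"
      using tendsto_upperbound by fastforce
  qed
qed

lemma diff_iff_E:
  fixes h :: "real \<Rightarrow> 'a::banach"
  assumes T: "T > 0" and tS: "t \<in> {0..T}"
  shows "h differentiable (at t within {0..T}) \<longleftrightarrow>
    (\<forall>j::nat. \<exists>k::nat. \<forall>y\<in>{0..T}. \<forall>y'\<in>{0..T}. (0 < \<bar>y - t\<bar> \<and> \<bar>y - t\<bar> < 1 / Suc k \<and> 0 < \<bar>y' - t\<bar> \<and> \<bar>y' - t\<bar> < 1 / Suc k)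
      \<longrightarrow> dist ((h y - h t) /\<^sub>R (y - t)) ((h y' - h t) /\<^sub>R (y' - t)) \<le> 1 / Suc j)"
  (is "?L \<longleftrightarrow> ?R")
proof
  let ?Q = "\<lambda>y. (h y - h t) /\<^sub>R (y - t)"
  assume ?L
  then obtain v where "(h has_vector_derivative v) (at t within {0..T})"
    using vector_derivative_works by blast
  then have lim: "(?Q \<longlongrightarrow> v) (at t within {0..T})" by (rule vd_quot2)
  show ?R
  proof
    fix j :: nat
    have "(0::real) < 1 / (2 * Suc j)" by simp
    from lim[unfolded tendsto_iff, rule_format, OF this]
    obtain d where d: "d > 0" "\<forall>y\<in>{0..T}. y \<noteq> t \<and> dist y t < d \<longrightarrow> dist (?Q y) v < 1 / (2 * Suc j)"
      unfolding eventually_at by blast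
    obtain k :: nat where k: "1 / Suc k < d"
      using d(1) by (metis nat_approx_posE)
    show "\<exists>k::nat. \<forall>y\<in>{0..T}. \<forall>y'\<in>{0..T}. (0 < \<bar>y - t\<bar> \<and> \<bar>y - t\<bar> < 1 / Suc k \<and> 0 < \<bar>y' - t\<bar> \<and> \<bar>y' - t\<bar> < 1 / Suc k)
      \<longrightarrow> dist (?Q y) (?Q y') \<le> 1 / Suc j"
    proof (intro exI[of _ k] ballI impI, elim conjE)
      fix y y' assume yS: "y \<in> {0..T}" and y'S: "y' \<in> {0..T}"
        and 1: "0 < \<bar>y - t\<bar>" and 2: "\<bar>y - t\<bar> < 1 / Suc k" and 3: "0 < \<bar>y' - t\<bar>" and 4: "\<bar>y' - t\<bar> < 1 / Suc k"
      have "y \<noteq> t" "dist y t < d" using 1 2 k by (auto simp: dist_real_def)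
      then have a: "dist (?Q y) v < 1 / (2 * Suc j)" using d(2) yS by blast
      have "y' \<noteq> t" "dist y' t < d" using 3 4 k by (auto simp: dist_real_def)
      then have b: "dist (?Q y') v < 1 / (2 * Suc j)" using d(2) y'S by blast
      have h2: "1 / real (2 * Suc j) + 1 / real (2 * Suc j) = 1 / Suc j" by (simp add: field_simps)
      have "dist (?Q y) (?Q y') \<le> dist (?Q y) v + dist (?Q y') v" by (rule dist_triangle2)
      also have "\<dots> \<le> 1 / Suc j" using add_strict_mono[OF a b] unfolding h2 by (rule less_imp_le)
      finally show "dist (?Q y) (?Q y') \<le> 1 / Suc j" .
    qed
  qed
next
  let ?Q = "\<lambda>y. (h y - h t) /\<^sub>R (y - t)"
  let ?F = "at t within {0..T}"
  assume R: ?R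
  have cf: "cauchy_filter (filtermap ?Q ?F)"
  proof (subst cauchy_filter_metric_filtermap, intro allI impI)
    fix e :: real assume "e > 0"
    then obtain j :: nat where j: "1 / Suc j < e" by (metis nat_approx_posE)
    from R obtain k :: nat where k: "\<forall>y\<in>{0..T}. \<forall>y'\<in>{0..T}. (0 < \<bar>y - t\<bar> \<and> \<bar>y - t\<bar> < 1 / Suc k \<and> 0 < \<bar>y' - t\<bar> \<and> \<bar>y' - t\<bar> < 1 / Suc k)
      \<longrightarrow> dist (?Q y) (?Q y') \<le> 1 / Suc j" by blast
    let ?P = "\<lambda>y. y \<in> {0..T} \<and> 0 < \<bar>y - t\<bar> \<and> \<bar>y - t\<bar> < 1 / Suc k"
    have "eventually ?P ?F"
      unfolding eventually_at by (rule exI[of _ "1 / Suc k"]) (auto simp: dist_real_def)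
    moreover have "\<forall>x y. ?P x \<and> ?P y \<longrightarrow> dist (?Q x) (?Q y) < e"
    proof (intro allI impI)
      fix x y assume "?P x \<and> ?P y"
      then have "dist (?Q x) (?Q y) \<le> 1 / Suc j" using k by blast
      then show "dist (?Q x) (?Q y) < e" using j by linarith
    qed
    ultimately show "\<exists>P. eventually P ?F \<and> (\<forall>x y. P x \<and> P y \<longrightarrow> dist (?Q x) (?Q y) < e)"
      by blast
  qed
  have nb: "?F \<noteq> bot" using islimpt_Icc[OF T] tS trivial_limit_within by blast
  then have "filtermap ?Q ?F \<noteq> bot" by (simp add: filtermap_bot_iff)
  then obtain v where "filtermap ?Q ?F \<le> nhds v"
    using cauchy_filter_complete_converges[OF cf complete_UNIV] by auto
  then have "(?Q \<longlongrightarrow> v) ?F" by (simp add: filterlim_def)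
  then have "(h has_vector_derivative v) ?F" by (rule vd_quot)
  then show ?L by (rule differentiableI_vector)
qed

lemma hdot_meas:
  fixes h :: "real \<Rightarrow> 'a::euclidean_space"
  assumes T: "T > 0" and hc: "continuous_on {0..T} h"
  shows "hdot T h \<in> borel_measurable (lebesgue_on {0..T})"
proof -
  define E where "E j k = {t\<in>{0..T}. \<forall>y\<in>{0..T}. \<forall>y'\<in>{0..T}. (0 < \<bar>y - t\<bar> \<and> \<bar>y - t\<bar> < 1 / Suc k \<and> 0 < \<bar>y' - t\<bar> \<and> \<bar>y' - t\<bar> < 1 / Suc k)
      \<longrightarrow> dist ((h y - h t) /\<^sub>R (y - t)) ((h y' - h t) /\<^sub>R (y' - t)) \<le> 1 / Suc j}" for j k :: nat
  define D where "D = {t\<in>{0..T}. h differentiable (at t within {0..T})}"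
  have DE: "D = (\<Inter>j. \<Union>k. E j k)"
  proof (intro set_eqI iffI)
    fix t assume "t \<in> D"
    then have tS: "t \<in> {0..T}" and "h differentiable (at t within {0..T})" by (auto simp: D_def)
    then show "t \<in> (\<Inter>j. \<Union>k. E j k)" using diff_iff_E[OF T tS, of h] tS by (auto simp: E_def)
  next
    fix t assume t: "t \<in> (\<Inter>j. \<Union>k. E j k)"
    then have tS: "t \<in> {0..T}" by (auto simp: E_def)
    have "h differentiable (at t within {0..T})"
      using diff_iff_E[OF T tS, of h] t by (auto simp: E_def)
    then show "t \<in> D" using tS by (auto simp: D_def)
  qed
  have Eb: "E j k \<in> sets borel" for j k
    unfolding E_def using closed_E[OF hc] by (rule borel_closed)
  have Db: "D \<in> sets borel" unfolding DE
    using Eb by (intro sets.countable_INT' sets.countable_UN') auto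
  define c :: 'a where "c = (SOME v. False)"
  have hd_nd: "hdot T h t = c" if "t \<notin> D" "t \<in> {0..T}" for t
  proof -
    have "\<not> (\<exists>v. (h has_vector_derivative v) (at t within {0..T}))"
      using that by (auto simp: D_def differentiableI_vector)
    then have "(\<lambda>v. (h has_vector_derivative v) (at t within {0..T})) = (\<lambda>v. False)" by auto
    then show ?thesis unfolding hdot_def vector_derivative_def c_def by simp
  qed
  have hd_d: "(h has_vector_derivative hdot T h t) (at t within {0..T})" if "t \<in> D" for t
    using that unfolding D_def hdot_def using vector_derivative_works by blast
  define hh where "hh = (\<lambda>t. h (max 0 (min T t)))"
  have hhc: "continuous_on UNIV hh" unfolding hh_def
    by (rule continuous_on_compose2[OF hc]) (auto intro!: continuous_intros simp: T less_imp_le)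
  have hh_eq: "hh t = h t" if "t \<in> {0..T}" for t using that by (simp add: hh_def)
  define ek where "ek k t = (if t \<le> T/2 then (T/2) * inverse (real (Suc k)) else - ((T/2) * inverse (real (Suc k))))" for k :: nat and t :: real
  define G where "G k t = (if t \<in> D then (hh (t + ek k t) - hh t) /\<^sub>R ek k t else c)" for k t
  define F where "F t = (if t \<in> D then hdot T h t else c)" for t
  have [measurable]: "hh \<in> borel_measurable borel" by (rule borel_measurable_continuous_onI[OF hhc])
  have [measurable]: "ek k \<in> borel_measurable borel" for k unfolding ek_def by measurable
  have Gm: "G k \<in> borel_measurable borel" for k
    unfolding G_def by (rule measurable_If_set) (use Db in auto)
  have conv: "(\<lambda>k. G k t) \<longlonglongrightarrow> F t" for t
  proof (cases "t \<in> D")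
    case False then show ?thesis by (simp add: G_def F_def)
  next
    case True
    then have tS: "t \<in> {0..T}" by (simp add: D_def)
    have ek0: "(\<lambda>k. ek k t) \<longlonglongrightarrow> 0"
    proof (cases "t \<le> T/2")
      case True
      then show ?thesis unfolding ek_def
        using tendsto_mult_right_zero[OF LIMSEQ_inverse_real_of_nat, of "T/2"] by simp
    next
      case False
      then show ?thesis unfolding ek_def
        using tendsto_minus[OF tendsto_mult_right_zero[OF LIMSEQ_inverse_real_of_nat, of "T/2"]] by simp
    qed
    have ekS: "t + ek k t \<in> {0..T} \<and> t + ek k t \<noteq> t" for k
    proof -
      have i1: "inverse (real (Suc k)) \<le> 1" "inverse (real (Suc k)) > 0" by (auto simp: inverse_le_1_iff)
      define a where "a = (T/2) * inverse (real (Suc k))"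
      have "0 < a" "a \<le> T/2"
        using i1 T unfolding a_def by (auto intro: mult_left_le)
      then show ?thesis using tS unfolding ek_def a_def[symmetric] by auto
    qed
    have yl: "filterlim (\<lambda>k. t + ek k t) (at t within {0..T}) sequentially"
      unfolding filterlim_at using ekS tendsto_add[OF tendsto_const[of t] ek0] by auto
    have "((\<lambda>k. (h (t + ek k t) - h t) /\<^sub>R ((t + ek k t) - t)) \<longlongrightarrow> hdot T h t) sequentially"
      by (rule filterlim_compose[OF vd_quot2[OF hd_d[OF True]] yl])
    moreover have "G k t = (h (t + ek k t) - h t) /\<^sub>R ((t + ek k t) - t)" for k
      using True ekS[of k] tS by (simp add: G_def hh_eq)
    ultimately show ?thesis using True by (simp add: F_def)
  qed
  have Fm: "F \<in> borel_measurable borel"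
    by (rule borel_measurable_LIMSEQ_metric[OF Gm conv])
  then have "F \<in> borel_measurable lebesgue"
    using measurable_completion measurable_lborel2 by metis
  then have "F \<in> borel_measurable (lebesgue_on {0..T})"
    by (rule measurable_restrict_space1)
  moreover have "\<forall>t\<in>space (lebesgue_on {0..T}). F t = hdot T h t"
    using hd_nd by (auto simp: F_def)
  ultimately show ?thesis using measurable_cong by metis
qed



lemma hdot_L2:
  fixes h :: "real \<Rightarrow> 'a::euclidean_space"
  assumes T: "T > 0" and h: "C0 T h" and en: "energy T h \<le> ennreal \<alpha>" and al: "\<alpha> > 0"
  shows "(\<lambda>s. (norm (hdot T h s))\<^sup>2) integrable_on {0..T}"
    "integral {0..T} (\<lambda>s. (norm (hdot T h s))\<^sup>2) \<le> \<alpha>"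
proof -
  have hm: "hdot T h \<in> borel_measurable (lebesgue_on {0..T})"
    by (rule hdot_meas[OF T]) (use h in \<open>simp add: C0_def\<close>)
  have ac: "abs_continuous_on 0 T h"
    using en by (auto simp: energy_def top_unique split: if_splits)
  have nn: "(\<integral>\<^sup>+ t. ennreal ((norm (hdot T h t))\<^sup>2) \<partial>(lebesgue_on {0..T})) \<le> ennreal \<alpha>"
    using en ac by (simp add: energy_def)
  have f2m: "(\<lambda>s. (norm (hdot T h s))\<^sup>2) \<in> borel_measurable (lebesgue_on {0..T})"
    using hm by measurable
  have int: "integrable (lebesgue_on {0..T}) (\<lambda>s. (norm (hdot T h s))\<^sup>2)"
  proof (rule integrableI_bounded[OF f2m])
    have "(\<integral>\<^sup>+ t. ennreal (norm ((norm (hdot T h t))\<^sup>2)) \<partial>(lebesgue_on {0..T})) \<le> ennreal \<alpha>"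
      using nn by simp
    then show "(\<integral>\<^sup>+ t. ennreal (norm ((norm (hdot T h t))\<^sup>2)) \<partial>(lebesgue_on {0..T})) < \<infinity>"
      using le_less_trans[OF _ ennreal_less_top] by (metis infinity_ennreal_def)
  qed
  have eq: "(\<integral>\<^sup>+ t. ennreal ((norm (hdot T h t))\<^sup>2) \<partial>(lebesgue_on {0..T}))
      = ennreal (integral\<^sup>L (lebesgue_on {0..T}) (\<lambda>s. (norm (hdot T h s))\<^sup>2))"
    by (rule nn_integral_eq_integral[OF int]) auto
  have le: "integral\<^sup>L (lebesgue_on {0..T}) (\<lambda>s. (norm (hdot T h s))\<^sup>2) \<le> \<alpha>"
    using nn eq al by (simp add: ennreal_le_iff)
  have hi: "((\<lambda>s. (norm (hdot T h s))\<^sup>2) has_integral (integral\<^sup>L (lebesgue_on {0..T}) (\<lambda>s. (norm (hdot T h s))\<^sup>2))) {0..T}"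
    by (rule has_integral_integral_lebesgue_on[OF int]) auto
  then show "(\<lambda>s. (norm (hdot T h s))\<^sup>2) integrable_on {0..T}" by blast
  show "integral {0..T} (\<lambda>s. (norm (hdot T h s))\<^sup>2) \<le> \<alpha>"
    using integral_unique[OF hi] le by simp
qed

lemma hdot_L1:
  fixes h :: "real \<Rightarrow> 'a::euclidean_space"
  assumes T: "T > 0" and h: "C0 T h" and en: "energy T h \<le> ennreal \<alpha>" and al: "\<alpha> > 0"
    and ab: "0 \<le> a" "a \<le> b" "b \<le> T"
  shows "(\<lambda>s. norm (hdot T h s)) integrable_on {a..b}"
    "integral {a..b} (\<lambda>s. norm (hdot T h s)) \<le> sqrt ((b - a) * \<alpha>)"
proof -
  let ?f = "\<lambda>s. norm (hdot T h s)"
  let ?f2 = "\<lambda>s. (norm (hdot T h s))\<^sup>2"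
  have hm: "hdot T h \<in> borel_measurable (lebesgue_on {0..T})"
    by (rule hdot_meas[OF T]) (use h in \<open>simp add: C0_def\<close>)
  then have "hdot T h \<in> borel_measurable (lebesgue_on {a..b})"
    by (rule measurable_restrict_mono) (use ab in auto)
  then have fm: "?f \<in> borel_measurable (lebesgue_on {a..b})" by measurable
  have sub: "{a..b} \<subseteq> {0..T}" using ab by auto
  have f2i: "?f2 integrable_on {a..b}"
    using integrable_on_subinterval[OF hdot_L2(1)[OF T h en al] sub] by simp
  have f2le: "integral {a..b} ?f2 \<le> \<alpha>"
    using integral_subset_le[OF sub f2i hdot_L2(1)[OF T h en al]] hdot_L2(2)[OF T h en al] by simp
  have "?f integrable_on {a..b} \<and> integral {a..b} ?f \<le> sqrt ((b - a) * \<alpha>)"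
  proof (cases "a = b")
    case True
    then show ?thesis using has_integral_refl(2)[of ?f b] by (auto simp: integrable_on_def)
  next
    case False
    then have ba: "b - a > 0" using ab by simp
    define k where "k = sqrt (\<alpha> / (b - a))"
    have kp: "k > 0" using ba al by (simp add: k_def)
    let ?g = "\<lambda>s. (?f2 s / k + k) / 2"
    have I2: "(?f2 has_integral integral {a..b} ?f2) {a..b}" using f2i by (rule integrable_integral)
    have gI: "(?g has_integral ((integral {a..b} ?f2 / k + k * (b - a)) / 2)) {a..b}"
      using has_integral_divide[OF has_integral_add[OF has_integral_divide[OF I2, of k] has_integral_const_real[of k a b]], of 2] ab
      by (simp add: mult.commute)
    then have gi: "?g integrable_on {a..b}" by blast
    have bound: "?f s \<le> ?g s" for s
    proof -
      have "0 \<le> (?f s - k)\<^sup>2" by simp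
      then have a: "?f s * (2 * k) \<le> ?f2 s + k * k" by (simp add: power2_eq_square algebra_simps)
      have b: "(?f2 s / k + k) / 2 = (?f2 s + k * k) / (2 * k)" using kp by (simp add: field_simps)
      show ?thesis unfolding b using a kp by (simp add: pos_le_divide_eq)
    qed
    have fi: "?f integrable_on {a..b}"
      by (rule measurable_bounded_by_integrable_imp_integrable_real[OF fm gi]) (use bound in auto)
    have kk: "k * k = \<alpha> / (b - a)" unfolding k_def using ba al by simp
    have kb: "k * (b - a) = sqrt ((b - a) * \<alpha>)"
    proof -
      have "k * (b - a) = sqrt (\<alpha> / (b - a)) * sqrt ((b - a)\<^sup>2)" using ba by (simp add: k_def)
      also have "\<dots> = sqrt (\<alpha> / (b - a) * (b - a)\<^sup>2)" by (rule real_sqrt_mult[symmetric])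
      also have "\<alpha> / (b - a) * (b - a)\<^sup>2 = (b - a) * \<alpha>" using ba by (simp add: power2_eq_square field_simps)
      finally show ?thesis .
    qed
    have ak: "\<alpha> / k = k * (b - a)"
    proof -
      have "\<alpha> = k * k * (b - a)" using kk ba by simp
      then show ?thesis using kp by (simp add: field_simps)
    qed
    have "integral {a..b} ?f \<le> integral {a..b} ?g"
      by (rule integral_le[OF fi gi]) (use bound in auto)
    also have "integral {a..b} ?g = (integral {a..b} ?f2 / k + k * (b - a)) / 2"
      using gI by (rule integral_unique)
    also have "\<dots> \<le> (\<alpha> / k + k * (b - a)) / 2"
      using f2le kp by (auto simp: less_imp_le intro!: divide_right_mono add_right_mono)
    also have "\<alpha> / k = sqrt ((b - a) * \<alpha>)" using ak kb by simp
    also have "k * (b - a) = sqrt ((b - a) * \<alpha>)" by (rule kb)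
    finally show ?thesis using fi by simp
  qed
  then show "?f integrable_on {a..b}" "integral {a..b} ?f \<le> sqrt ((b - a) * \<alpha>)" by auto
qed



lemma matvec_norm:
  fixes A :: "real^'m^'d" and v :: "real^'m"
  shows "norm (A *v v) \<le> norm A * norm v"
proof -
  have "(norm (A *v v))\<^sup>2 = (\<Sum>i\<in>UNIV. ((A *v v) $ i)\<^sup>2)"
    by (simp add: norm_vec_def L2_set_def sum_nonneg)
  also have "\<dots> \<le> (\<Sum>i\<in>UNIV. (norm (A $ i))\<^sup>2 * (norm v)\<^sup>2)"
  proof (rule sum_mono)
    fix i
    have "(A *v v) $ i = A $ i \<bullet> v" by (simp add: matrix_vector_mult_def inner_vec_def)
    then have "\<bar>(A *v v) $ i\<bar> \<le> norm (A $ i) * norm v" using Cauchy_Schwarz_ineq2 by simp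
    then have "\<bar>(A *v v) $ i\<bar>\<^sup>2 \<le> (norm (A $ i) * norm v)\<^sup>2"
      by (rule power_mono) simp
    then show "((A *v v) $ i)\<^sup>2 \<le> (norm (A $ i))\<^sup>2 * (norm v)\<^sup>2" by (simp add: power_mult_distrib)
  qed
  also have "\<dots> = (\<Sum>i\<in>UNIV. (norm (A $ i))\<^sup>2) * (norm v)\<^sup>2"
    by (simp add: sum_distrib_right)
  also have "(\<Sum>i\<in>UNIV. (norm (A $ i))\<^sup>2) = (norm A)\<^sup>2"
    unfolding norm_vec_def[of A] L2_set_def by (simp add: sum_nonneg)
  also have "(norm A)\<^sup>2 * (norm v)\<^sup>2 = (norm A * norm v)\<^sup>2"
    by (simp add: power_mult_distrib)
  finally show ?thesis
    using power2_le_imp_le by (metis mult_nonneg_nonneg norm_ge_zero)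
qed

lemma phi_props:
  assumes "0 \<le> r"
  shows "0 \<le> phi n r" "phi n r \<le> r" "r - phi n r \<le> 1 / 2 ^ n"
proof -
  have p: "(0::real) < 2 ^ n" by simp
  have f1: "real_of_int \<lfloor>r * 2 ^ n\<rfloor> \<le> r * 2 ^ n" by (rule of_int_floor_le)
  have f2: "r * 2 ^ n < real_of_int \<lfloor>r * 2 ^ n\<rfloor> + 1" by (rule real_of_int_floor_add_one_gt)
  have f3: "0 \<le> \<lfloor>r * 2 ^ n\<rfloor>" using assms by simp
  show "0 \<le> phi n r" unfolding phi_def using f3 by simp
  show "phi n r \<le> r" unfolding phi_def using f1 p by (simp add: divide_le_eq)
  have "r - phi n r = (r * 2 ^ n - real_of_int \<lfloor>r * 2 ^ n\<rfloor>) / 2 ^ n"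
    unfolding phi_def using p by (simp add: field_simps)
  also have "\<dots> \<le> 1 / 2 ^ n" using f2 p by (intro divide_right_mono) (linarith, simp)
  finally show "r - phi n r \<le> 1 / 2 ^ n" .
qed

lemma step_alg:
  fixes B W x :: real
  assumes "B > 0" "0 \<le> x" "x \<le> 1/2" "W \<le> B + x * (W + 2 * B)"
  shows "W \<le> B * exp (6 * x)"
proof -
  have "W * (1 - x) \<le> B * (1 + 2 * x)" using assms(4) by (simp add: algebra_simps)
  moreover have "B * (1 + 2 * x) \<le> B * (1 + 6 * x) * (1 - x)"
  proof -
    have "0 \<le> x * (1 - 2 * x)" using assms(2,3) by simp
    then have "1 + 2 * x \<le> (1 + 6 * x) * (1 - x)" by (simp add: algebra_simps)
    then show ?thesis using assms(1) by (simp add: mult.assoc)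
  qed
  ultimately have "W * (1 - x) \<le> B * (1 + 6 * x) * (1 - x)" by linarith
  then have "W \<le> B * (1 + 6 * x)" using assms(3) by (simp add: mult_le_cancel_right)
  also have "\<dots> \<le> B * exp (6 * x)" using assms(1) exp_ge_add_one_self[of "6 * x"]
    by (intro mult_left_mono) auto
  finally show ?thesis .
qed

lemma exp_bound:
  fixes y :: real
  assumes "0 \<le> y" "y \<le> 1"
  shows "y / 2 \<le> 1 - exp (- y)"
proof -
  have "1 + y \<le> exp y" by (rule exp_ge_add_one_self)
  then have "exp (- y) \<le> 1 / (1 + y)" using assms by (simp add: exp_minus field_simps)
  moreover have "y / 2 \<le> 1 - 1 / (1 + y)" using assms mult_left_le[of y y] by (simp add: field_simps)
  ultimately show ?thesis by linarith
qed

lemma Nchoice: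
  fixes \<mu> R lam :: real
  assumes mu: "\<mu> > 0" and R: "R \<ge> 0" and lam: "lam \<ge> \<mu> * (1 + ln (R + 3))"
  obtains N :: nat where "real N > exp 1" "R \<le> real N" "1 \<le> ln (real N)" "ln (real N) \<le> 2 * lam / \<mu>"
    "1 / real N powr \<mu> \<le> exp (- lam)"
proof -
  define E where "E = exp (lam / \<mu>)"
  have l1: "lam / \<mu> \<ge> 1 + ln (R + 3)" using lam mu by (simp add: field_simps)
  have lnR: "ln (R + 3) > 0" using R by simp
  have "E \<ge> exp (1 + ln (R + 3))" unfolding E_def using l1 by simp
  also have "exp (1 + ln (R + 3)) = exp 1 * (R + 3)" using R by (simp add: exp_add)
  finally have E1: "E \<ge> exp 1 * (R + 3)" .
  have e1: "exp (1::real) \<ge> 1" by simp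
  have "1 * (R + 3) \<le> exp 1 * (R + 3)" using mult_right_mono[OF e1, of "R+3"] R by linarith
  then have E3: "E \<ge> R + 3" using E1 by simp
  have q: "exp 1 * 1 < exp 1 * (R + 3)" by (rule mult_strict_left_mono) (use R in auto)
  have Ee: "E > exp 1" using E1 q by linarith
  define N where "N = nat \<lceil>E\<rceil>"
  have NE: "real N \<ge> E" unfolding N_def by linarith
  have NE2: "real N \<le> E + 1" unfolding N_def using E3 R by linarith
  have Npos: "real N > 0" using NE E3 R by linarith
  show ?thesis
  proof
    show "real N > exp 1" using NE Ee by linarith
    show "R \<le> real N" using NE E3 by linarith
    have "ln (real N) \<ge> ln (exp 1)" using NE Ee by (intro ln_mono) auto
    then show "1 \<le> ln (real N)" by simp
    have "ln (real N) \<le> ln (2 * E)" using NE2 E3 Npos R by (intro ln_mono) auto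
    also have "\<dots> = ln 2 + lam / \<mu>" unfolding E_def by (simp add: ln_mult)
    also have "\<dots> \<le> 2 * lam / \<mu>"
    proof -
      have "ln (2::real) \<le> 1" using ln_2_less_1 by linarith
      moreover have "2 * lam / \<mu> = lam / \<mu> + lam / \<mu>" by simp
      ultimately show ?thesis using l1 lnR by linarith
    qed
    finally show "ln (real N) \<le> 2 * lam / \<mu>" .
    have "real N powr \<mu> \<ge> E powr \<mu>" using NE E3 R mu by (intro powr_mono2) auto
    moreover have "E powr \<mu> = exp lam" unfolding E_def powr_def using mu by simp
    ultimately have "real N powr \<mu> \<ge> exp lam" by simp
    have em: "exp (- lam) = 1 / exp lam" by (simp add: exp_minus divide_inverse)
    show "1 / real N powr \<mu> \<le> exp (- lam)" unfolding em
      by (rule divide_left_mono) (use \<open>real N powr \<mu> \<ge> exp lam\<close> Npos in \<open>auto intro!: mult_pos_pos\<close>)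
  qed
qed

lemma sol_props:
  fixes \<sigma> :: "real^'d \<Rightarrow> real^'m^'d" and b :: "real^'d \<Rightarrow> real^'d" and h :: "real \<Rightarrow> real^'m"
    and Y P :: "real \<Rightarrow> real^'d"
  assumes T: "T > 0" and h: "C0 T h" and en: "energy T h \<le> ennreal \<alpha>" and al: "\<alpha> > 0"
    and Ms: "\<And>y. norm (\<sigma> y) \<le> Ms" and Mb: "\<And>y. norm (b y) \<le> Mb"
    and sol0: "\<forall>t\<in>{0..T}. ((\<lambda>s. \<sigma> (P s) *v hdot T h s + b (P s)) has_integral (Y t - x)) {0..t}"
  shows "(\<lambda>s. \<sigma> (P s) *v hdot T h s + b (P s)) integrable_on {0..T}"
    "\<And>s t. 0 \<le> s \<Longrightarrow> s \<le> t \<Longrightarrow> t \<le> T \<Longrightarrow> Y t - Y s = integral {s..t} (\<lambda>s. \<sigma> (P s) *v hdot T h s + b (P s))"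
    "\<And>s t. 0 \<le> s \<Longrightarrow> s \<le> t \<Longrightarrow> t \<le> T \<Longrightarrow> norm (Y t - Y s) \<le> Ms * sqrt ((t - s) * \<alpha>) + Mb * (t - s)"
    "continuous_on {0..T} Y"
    "Y 0 = x"
proof -
  let ?f = "\<lambda>s. \<sigma> (P s) *v hdot T h s + b (P s)"
  have sol: "(?f has_integral (Y t - x)) {0..t}" if "t \<in> {0..T}" for t using sol0 that by blast
  show fi: "?f integrable_on {0..T}" using sol[of T] T by auto
  have Yi: "Y t = x + integral {0..t} ?f" if "t \<in> {0..T}" for t
    using integral_unique[OF sol[OF that]] by simp
  have "(?f has_integral 0) {0..0}" using has_integral_refl(2)[of ?f 0] by simp
  then show Y0: "Y 0 = x" using has_integral_unique[OF sol[of 0]] T by force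
  show split: "Y t - Y s = integral {s..t} ?f" if "0 \<le> s" "s \<le> t" "t \<le> T" for s t
  proof -
    have ft: "?f integrable_on {0..t}" by (rule integrable_on_subinterval[OF fi]) (use that in auto)
    then have "integral {0..s} ?f + integral {s..t} ?f = integral {0..t} ?f"
      using Henstock_Kurzweil_Integration.integral_combine[where a=0 and c=s and b=t, OF _ _ ft] that by auto
    then show ?thesis using Yi[of t] Yi[of s] that by (auto simp: algebra_simps)
  qed
  show "norm (Y t - Y s) \<le> Ms * sqrt ((t - s) * \<alpha>) + Mb * (t - s)" if "0 \<le> s" "s \<le> t" "t \<le> T" for s t
  proof -
    let ?w = "\<lambda>r. norm (hdot T h r)"
    have wi: "?w integrable_on {s..t}" and wle: "integral {s..t} ?w \<le> sqrt ((t - s) * \<alpha>)"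
      using hdot_L1[OF T h en al that] by auto
    have fi': "?f integrable_on {s..t}" by (rule integrable_on_subinterval[OF fi]) (use that in auto)
    have gI: "((\<lambda>r. Ms * ?w r + Mb) has_integral (Ms * integral {s..t} ?w + Mb * (t - s))) {s..t}"
      using has_integral_add[OF has_integral_mult_right[OF integrable_integral[OF wi], of Ms] has_integral_const_real[of Mb s t]] that
      by (simp add: mult.commute)
    have bnd: "norm (?f r) \<le> Ms * ?w r + Mb" for r
    proof -
      have "norm (?f r) \<le> norm (\<sigma> (P r) *v hdot T h r) + norm (b (P r))" by (rule norm_triangle_ineq)
      also have "norm (\<sigma> (P r) *v hdot T h r) \<le> norm (\<sigma> (P r)) * ?w r" by (rule matvec_norm)
      also have "norm (\<sigma> (P r)) * ?w r \<le> Ms * ?w r" by (rule mult_right_mono[OF Ms]) simp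
      finally show ?thesis using Mb[of "P r"] by linarith
    qed
    have "norm (Y t - Y s) = norm (integral {s..t} ?f)" using split[OF that] by simp
    also have "\<dots> \<le> integral {s..t} (\<lambda>r. Ms * ?w r + Mb)"
      by (rule integral_norm_bound_integral[OF fi']) (use gI bnd in auto)
    also have "\<dots> = Ms * integral {s..t} ?w + Mb * (t - s)" using gI by (rule integral_unique)
    also have "\<dots> \<le> Ms * sqrt ((t - s) * \<alpha>) + Mb * (t - s)"
    proof -
      have "0 \<le> Ms" using Ms[of 0] norm_ge_zero order_trans by blast
      then show ?thesis using wle by (simp add: mult_left_mono)
    qed
    finally show ?thesis .
  qed
  have "continuous_on {0..T} (\<lambda>t. x + integral {0..t} ?f)"
    by (intro continuous_intros indefinite_integral_continuous_1[OF fi])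
  then show "continuous_on {0..T} Y" using continuous_on_eq Yi by (metis (no_types, lifting))
qed



lemma core:
  fixes \<sigma> :: "real^'d \<Rightarrow> real^'m^'d" and b :: "real^'d \<Rightarrow> real^'d" and h :: "real \<Rightarrow> real^'m"
    and Y Z :: "real \<Rightarrow> real^'d" and x :: "real^'d"
  assumes T: "T > 0" and Cp: "C > 0" and mu: "\<mu> > 0" and al: "\<alpha> > 0"
    and h: "C0 T h" and en: "energy T h \<le> ennreal \<alpha>"
    and Ms: "\<And>y. norm (\<sigma> y) \<le> Ms" and Mb: "\<And>y. norm (b y) \<le> Mb"
    and \<sigma>_reg: "\<And>(N::nat) y z. real N > exp 1 \<Longrightarrow> norm y \<le> real N \<Longrightarrow> norm z \<le> real N \<Longrightarrow>
        norm (\<sigma> y - \<sigma> z) \<le> C * sqrt (ln (real N)) * norm (y - z) + C * ln (real N) / real N powr \<mu>"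
    and b_reg: "\<And>(N::nat) y z. real N > exp 1 \<Longrightarrow> norm y \<le> real N \<Longrightarrow> norm z \<le> real N \<Longrightarrow>
        norm (b y - b z) \<le> C * ln (real N) * norm (y - z) + C * ln (real N) / real N powr \<mu>"
    and solY: "\<And>t. t \<in> {0..T} \<Longrightarrow> ((\<lambda>s. \<sigma> (Y (phi n s)) *v hdot T h s + b (Y (phi n s))) has_integral (Y t - x)) {0..t}"
    and solZ: "\<And>t. t \<in> {0..T} \<Longrightarrow> ((\<lambda>s. \<sigma> (Z s) *v hdot T h s + b (Z s)) has_integral (Z t - x)) {0..t}"
    and R_def: "R = norm x + Ms * sqrt (T * \<alpha>) + Mb * T"
    and K_def: "K = sqrt (T * \<alpha>) + T"
    and c_def: "c = 24 * C / \<mu>"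
    and Lam: "\<Lambda> \<ge> \<mu> * (1 + ln (R + 3))"
    and lam0_def: "lam0 = \<Lambda> * exp (c * K)"
    and tau: "\<tau> > 0" "sqrt (\<tau> * \<alpha>) + \<tau> \<le> mmax" "mmax \<le> \<mu> / (4 * C * lam0)" "mmax \<le> 1 / c"
    and delta: "Ms * sqrt (\<alpha> / 2 ^ n) + Mb / 2 ^ n \<le> exp (- lam0)"
  shows "\<forall>t\<in>{0..T}. norm (Y t - Z t) \<le> exp (- \<Lambda>)"
proof -
  let ?fY = "\<lambda>s. \<sigma> (Y (phi n s)) *v hdot T h s + b (Y (phi n s))"
  let ?fZ = "\<lambda>s. \<sigma> (Z s) *v hdot T h s + b (Z s)"
  let ?w = "\<lambda>s. norm (hdot T h s)"
  define A where "A t = integral {0..t} (\<lambda>s. ?w s + 1)" for t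
  define \<Phi> where "\<Phi> a = exp (- lam0 * exp (- c * a))" for a
  define u where "u t = norm (Y t - Z t)" for t
  have solY': "\<forall>t\<in>{0..T}. ((\<lambda>s. \<sigma> (Y (phi n s)) *v hdot T h s + b (Y (phi n s))) has_integral (Y t - x)) {0..t}"
    using solY by blast
  have solZ': "\<forall>t\<in>{0..T}. ((\<lambda>s. \<sigma> (Z s) *v hdot T h s + b (Z s)) has_integral (Z t - x)) {0..t}"
    using solZ by blast
  note sY = sol_props[where P="\<lambda>s. Y (phi n s)" and Y=Y and x=x, OF T h en al Ms Mb solY']
  note sZ = sol_props[where P=Z and Y=Z and x=x, OF T h en al Ms Mb solZ']
  have Ms0: "0 \<le> Ms" using Ms[of 0] norm_ge_zero order_trans by blast
  have Mb0: "0 \<le> Mb" using Mb[of 0] norm_ge_zero order_trans by blast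
  have R0: "0 \<le> R" unfolding R_def using Ms0 Mb0 T al by simp
  have cp: "c > 0" unfolding c_def using Cp mu by simp
  have Lp: "\<Lambda> > 0"
  proof -
    have "ln (R + 3) > 0" using R0 by simp
    then show ?thesis using Lam mu by (smt (verit) mult_pos_pos)
  qed
  have l0p: "lam0 > 0" unfolding lam0_def using Lp by simp
  have mm0: "0 \<le> mmax" using tau(1,2) al by (smt (verit) real_sqrt_ge_zero zero_le_mult_iff)
  have Rb: "norm (Y t) \<le> R \<and> norm (Z t) \<le> R" if "t \<in> {0..T}" for t
  proof -
    have st: "sqrt (t * \<alpha>) \<le> sqrt (T * \<alpha>)" using that al by (intro real_sqrt_le_mono mult_right_mono) auto
    have "norm (Y t) \<le> norm x + norm (Y t - Y 0)" using sY(5) by (metis norm_triangle_sub)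
    also have "norm (Y t - Y 0) \<le> Ms * sqrt ((t - 0) * \<alpha>) + Mb * (t - 0)" using that by (intro sY(3)) auto
    finally have 1: "norm (Y t) \<le> norm x + Ms * sqrt (t * \<alpha>) + Mb * t" by simp
    have "norm (Z t) \<le> norm x + norm (Z t - Z 0)" using sZ(5) by (metis norm_triangle_sub)
    also have "norm (Z t - Z 0) \<le> Ms * sqrt ((t - 0) * \<alpha>) + Mb * (t - 0)" using that by (intro sZ(3)) auto
    finally have 2: "norm (Z t) \<le> norm x + Ms * sqrt (t * \<alpha>) + Mb * t" by simp
    have "Ms * sqrt (t * \<alpha>) + Mb * t \<le> Ms * sqrt (T * \<alpha>) + Mb * T"
      using st that Ms0 Mb0 by (intro add_mono mult_left_mono) auto
    then show ?thesis using 1 2 unfolding R_def by linarith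
  qed
  have dlt: "norm (Y (phi n r) - Y r) \<le> exp (- lam0)" if "r \<in> {0..T}" for r
  proof -
    have p: "0 \<le> phi n r" "phi n r \<le> r" "r - phi n r \<le> 1 / 2 ^ n" using phi_props[of r n] that by auto
    have "norm (Y (phi n r) - Y r) = norm (Y r - Y (phi n r))" by (rule norm_minus_commute)
    also have "\<dots> \<le> Ms * sqrt ((r - phi n r) * \<alpha>) + Mb * (r - phi n r)"
      using p that by (intro sY(3)) auto
    also have "\<dots> \<le> Ms * sqrt (\<alpha> / 2 ^ n) + Mb / 2 ^ n"
    proof -
      have "(r - phi n r) * \<alpha> \<le> (1 / 2 ^ n) * \<alpha>" using p al by (intro mult_right_mono) auto
      then have "sqrt ((r - phi n r) * \<alpha>) \<le> sqrt (\<alpha> / 2 ^ n)" by (simp add: real_sqrt_le_mono)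
      moreover have "Mb * (r - phi n r) \<le> Mb * (1 / 2 ^ n)" using p Mb0 by (intro mult_left_mono) auto
      ultimately show ?thesis using Ms0 by (simp add: mult_left_mono add_mono)
    qed
    finally show ?thesis using delta by linarith
  qed
  have wI: "(\<lambda>s. ?w s + 1) integrable_on {a..bb} \<and> integral {a..bb} (\<lambda>s. ?w s + 1) \<le> sqrt ((bb - a) * \<alpha>) + (bb - a)
      \<and> 0 \<le> integral {a..bb} (\<lambda>s. ?w s + 1)" if "0 \<le> a" "a \<le> bb" "bb \<le> T" for a bb
  proof -
    have wi: "?w integrable_on {a..bb}" and wle: "integral {a..bb} ?w \<le> sqrt ((bb - a) * \<alpha>)"
      using hdot_L1[OF T h en al that] by auto
    have gI: "((\<lambda>s. ?w s + 1) has_integral (integral {a..bb} ?w + (bb - a))) {a..bb}"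
      using has_integral_add[OF integrable_integral[OF wi] has_integral_const_real[of 1 a bb]] that by simp
    have "0 \<le> integral {a..bb} (\<lambda>s. ?w s + 1)"
      using gI by (intro integral_nonneg) auto
    then show ?thesis using gI wle integral_unique[OF gI] by auto
  qed
  have Acomb: "A bb = A a + integral {a..bb} (\<lambda>s. ?w s + 1)" if "0 \<le> a" "a \<le> bb" "bb \<le> T" for a bb
  proof -
    have i: "(\<lambda>s. ?w s + 1) integrable_on {0..bb}" using wI[of 0 bb] that by auto
    show ?thesis unfolding A_def
      using Henstock_Kurzweil_Integration.integral_combine[where a=0 and c=a and b=bb, OF that(1,2) i] by simp
  qed
  have A0: "A 0 = 0" unfolding A_def by simp
  have Anneg: "0 \<le> A t" if "t \<in> {0..T}" for t using wI[of 0 t] that unfolding A_def by auto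
  have AK: "A t \<le> K" if "t \<in> {0..T}" for t
  proof -
    have "A t \<le> sqrt ((t - 0) * \<alpha>) + (t - 0)" using wI[of 0 t] that unfolding A_def by auto
    also have "\<dots> \<le> K" unfolding K_def using that al by (intro add_mono real_sqrt_le_mono mult_right_mono) auto
    finally show ?thesis .
  qed
  have Phi_mono: "\<Phi> a \<le> \<Phi> a'" if "a \<le> a'" for a a'
  proof -
    have "exp (- c * a') \<le> exp (- c * a)" using that cp by simp
    then have "- lam0 * exp (- c * a) \<le> - lam0 * exp (- c * a')" using l0p by simp
    then show ?thesis unfolding \<Phi>_def by simp
  qed
  have uc: "continuous_on {0..T} u" unfolding u_def
    by (intro continuous_intros sY(4) sZ(4))
  have u0: "u 0 = 0" unfolding u_def using sY(5) sZ(5) by simp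
  define g where "g i = min (real i * \<tau>) T" for i :: nat
  have g0: "0 \<le> g i" "g i \<le> T" for i unfolding g_def using tau(1) T by auto
  have claim: "\<forall>s\<in>{0..g i}. u s \<le> \<Phi> (A (g i))" for i
  proof (induction i)
    case 0
    have "min 0 T = (0::real)" using T by simp
    then show ?case unfolding g_def using u0 by (simp add: \<Phi>_def)
  next
    case (Suc i)
    define a where "a = g i"
    define bb where "bb = g (Suc i)"
    have ab: "0 \<le> a" "a \<le> bb" "bb \<le> T" "bb - a \<le> \<tau>"
      unfolding a_def bb_def g_def using tau(1) T by (auto simp: algebra_simps min_def)
    have IH: "\<forall>s\<in>{0..a}. u s \<le> \<Phi> (A a)" using Suc.IH unfolding a_def .
    define lam where "lam = lam0 * exp (- c * A a)"
    have Aa: "0 \<le> A a" "A a \<le> K" using Anneg[of a] AK[of a] ab by auto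
    have lamL: "\<Lambda> \<le> lam" "lam \<le> lam0"
    proof -
      have "exp (- c * K) \<le> exp (- c * A a)" using Aa cp by simp
      then have "lam0 * exp (- c * K) \<le> lam" unfolding lam_def using l0p by simp
      moreover have "lam0 * exp (- c * K) = \<Lambda>" unfolding lam0_def by (simp add: exp_minus)
      ultimately show "\<Lambda> \<le> lam" by simp
      have "exp (- c * A a) \<le> 1" using Aa cp by simp
      then show "lam \<le> lam0" unfolding lam_def using l0p by (simp add: mult_le_cancel_left1)
    qed
    define B where "B = exp (- lam)"
    have BPhi: "B = \<Phi> (A a)" unfolding B_def \<Phi>_def lam_def by simp
    have Bp: "B > 0" unfolding B_def by simp
    have lam0B: "exp (- lam0) \<le> B" unfolding B_def using lamL by simp
    obtain N :: nat where N: "real N > exp 1" "R \<le> real N" "1 \<le> ln (real N)" "ln (real N) \<le> 2 * lam / \<mu>"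
      "1 / real N powr \<mu> \<le> exp (- lam)"
      using Nchoice[OF mu R0, of lam] Lam lamL by auto
    define l where "l = ln (real N)"
    define m where "m = integral {a..bb} (\<lambda>s. ?w s + 1)"
    have m: "0 \<le> m" "m \<le> mmax"
    proof -
      have "m \<le> sqrt ((bb - a) * \<alpha>) + (bb - a)" "0 \<le> m" using wI[OF ab(1-3)] unfolding m_def by auto
      moreover have "sqrt ((bb - a) * \<alpha>) \<le> sqrt (\<tau> * \<alpha>)" using ab al by (intro real_sqrt_le_mono mult_right_mono) auto
      ultimately show "0 \<le> m" "m \<le> mmax" using tau(2) ab by linarith+
    qed
    define xx where "xx = C * l * m"
    have xx: "0 \<le> xx" "xx \<le> C * (2 * lam / \<mu>) * m" "xx \<le> 1/2"
    proof -
      show "0 \<le> xx" unfolding xx_def l_def using Cp N(3) m by simp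
      show x2: "xx \<le> C * (2 * lam / \<mu>) * m" unfolding xx_def l_def using Cp N(4) m
        by (intro mult_right_mono mult_left_mono) auto
      have "C * (2 * lam / \<mu>) * m \<le> C * (2 * lam0 / \<mu>) * mmax"
        using Cp mu lamL m Lp by (intro mult_mono mult_left_mono divide_right_mono) auto
      also have "\<dots> \<le> C * (2 * lam0 / \<mu>) * (\<mu> / (4 * C * lam0))"
        using tau(3) Cp mu l0p by (intro mult_left_mono) auto
      also have "\<dots> = 1/2" using Cp mu l0p by (simp add: field_simps)
      finally show "xx \<le> 1/2" using x2 by linarith
    qed
    have ucab: "continuous_on {a..bb} u" using continuous_on_subset[OF uc] ab by auto
    obtain sm where sm: "sm \<in> {a..bb}" "\<And>r. r \<in> {a..bb} \<Longrightarrow> u r \<le> u sm"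
      using continuous_attains_sup[OF compact_Icc _ ucab] ab by auto
    define W where "W = u sm"
    have W0: "0 \<le> W" unfolding W_def u_def by simp
    have pw: "norm (?fY r - ?fZ r) \<le> C * l * (W + 2 * B) * (?w r + 1)" if r: "r \<in> {a..sm}" for r
    proof -
      have rT: "r \<in> {0..T}" using r sm ab by auto
      have pT: "phi n r \<in> {0..T}" using phi_props[of r n] rT by auto
      define p where "p = Y (phi n r)"
      define q where "q = Z r"
      have pN: "norm p \<le> real N" unfolding p_def using Rb[OF pT] N(2) by linarith
      have qN: "norm q \<le> real N" unfolding q_def using Rb[OF rT] N(2) by linarith
      have "norm (p - q) \<le> norm (p - Y r) + norm (Y r - Z r)" using dist_triangle[of p q "Y r"] unfolding dist_norm q_def .
      also have "\<dots> \<le> B + W"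
      proof -
        have "norm (p - Y r) \<le> B" unfolding p_def using dlt[OF rT] lam0B by linarith
        moreover have "norm (Y r - Z r) \<le> W" using sm(2)[of r] r sm unfolding u_def W_def by auto
        ultimately show ?thesis by linarith
      qed
      finally have pq: "norm (p - q) \<le> B + W" .
      have l1: "1 \<le> l" unfolding l_def using N(3) .
      have sl: "sqrt l \<le> l"
      proof -
        have "sqrt l \<le> sqrt (l * l)" using l1 by (intro real_sqrt_le_mono) (simp add: mult_le_cancel_left1)
        then show ?thesis using l1 by simp
      qed
      have err: "C * l / real N powr \<mu> \<le> C * l * B"
      proof -
        have "C * l / real N powr \<mu> = C * l * (1 / real N powr \<mu>)" by simp
        also have "\<dots> \<le> C * l * B" unfolding B_def using N(5) Cp l1 by (intro mult_left_mono) auto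
        finally show ?thesis .
      qed
      have s1: "norm (\<sigma> p - \<sigma> q) \<le> C * l * (norm (p - q) + B)"
      proof -
        have "norm (\<sigma> p - \<sigma> q) \<le> C * sqrt l * norm (p - q) + C * l / real N powr \<mu>"
          unfolding l_def by (rule \<sigma>_reg[OF N(1) pN qN])
        also have "C * sqrt l * norm (p - q) \<le> C * l * norm (p - q)"
          using sl Cp by (intro mult_right_mono mult_left_mono) auto
        finally show ?thesis using err by (simp add: algebra_simps)
      qed
      have b1: "norm (b p - b q) \<le> C * l * (norm (p - q) + B)"
      proof -
        have "norm (b p - b q) \<le> C * l * norm (p - q) + C * l / real N powr \<mu>"
          unfolding l_def by (rule b_reg[OF N(1) pN qN])
        then show ?thesis using err by (simp add: algebra_simps)
      qed
      have "?fY r - ?fZ r = (\<sigma> p - \<sigma> q) *v hdot T h r + (b p - b q)"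
        unfolding p_def q_def by (simp add: matrix_vector_mult_diff_rdistrib algebra_simps)
      then have "norm (?fY r - ?fZ r) \<le> norm ((\<sigma> p - \<sigma> q) *v hdot T h r) + norm (b p - b q)"
        by (simp add: norm_triangle_ineq)
      also have "norm ((\<sigma> p - \<sigma> q) *v hdot T h r) \<le> norm (\<sigma> p - \<sigma> q) * ?w r" by (rule matvec_norm)
      also have "norm (\<sigma> p - \<sigma> q) * ?w r \<le> C * l * (norm (p - q) + B) * ?w r"
        using s1 by (intro mult_right_mono) auto
      finally have "norm (?fY r - ?fZ r) \<le> C * l * (norm (p - q) + B) * (?w r + 1)"
        using b1 by (simp add: algebra_simps)
      also have "\<dots> \<le> C * l * (W + 2 * B) * (?w r + 1)"
        using pq Cp l1 by (intro mult_right_mono mult_left_mono) auto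
      finally show ?thesis .
    qed
    have main: "W \<le> B + xx * (W + 2 * B)"
    proof -
      have sm': "0 \<le> a" "a \<le> sm" "sm \<le> T" using sm ab by auto
      have fYi: "?fY integrable_on {a..sm}" by (rule integrable_on_subinterval[OF sY(1)]) (use sm' in auto)
      have fZi: "?fZ integrable_on {a..sm}" by (rule integrable_on_subinterval[OF sZ(1)]) (use sm' in auto)
      obtain wi: "(\<lambda>s. ?w s + 1) integrable_on {a..sm}" using wI[OF sm'] by auto
      have ci: "(\<lambda>r. C * l * (W + 2 * B) * (?w r + 1)) integrable_on {a..sm}"
        using has_integral_mult_right[OF integrable_integral[OF wi], of "C * l * (W + 2 * B)"] by blast
      have "(Y sm - Z sm) - (Y a - Z a) = integral {a..sm} ?fY - integral {a..sm} ?fZ"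
        using sY(2)[OF sm'] sZ(2)[OF sm'] by (simp add: algebra_simps)
      also have "\<dots> = integral {a..sm} (\<lambda>r. ?fY r - ?fZ r)" by (rule integral_diff[OF fYi fZi, symmetric])
      finally have eq: "(Y sm - Z sm) - (Y a - Z a) = integral {a..sm} (\<lambda>r. ?fY r - ?fZ r)" .
      have "norm (integral {a..sm} (\<lambda>r. ?fY r - ?fZ r)) \<le> integral {a..sm} (\<lambda>r. C * l * (W + 2 * B) * (?w r + 1))"
        by (rule integral_norm_bound_integral) (use fYi fZi ci pw in \<open>auto intro: integrable_diff\<close>)
      also have "\<dots> = C * l * (W + 2 * B) * integral {a..sm} (\<lambda>r. ?w r + 1)" by simp
      also have "\<dots> \<le> C * l * (W + 2 * B) * m"
      proof -
        have "integral {a..sm} (\<lambda>r. ?w r + 1) \<le> m"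
        proof -
          have "A bb = A sm + integral {sm..bb} (\<lambda>s. ?w s + 1)" using Acomb[of sm bb] sm ab by auto
          moreover have "A sm = A a + integral {a..sm} (\<lambda>s. ?w s + 1)" using Acomb[of a sm] sm ab by auto
          moreover have "A bb = A a + m" unfolding m_def using Acomb[OF ab(1-3)] .
          moreover have "0 \<le> integral {sm..bb} (\<lambda>s. ?w s + 1)" using wI[of sm bb] sm ab by auto
          ultimately show ?thesis by linarith
        qed
        then show ?thesis using Cp N(3) W0 Bp unfolding l_def by (intro mult_left_mono) auto
      qed
      finally have I: "norm ((Y sm - Z sm) - (Y a - Z a)) \<le> xx * (W + 2 * B)"
        unfolding eq xx_def by (simp add: algebra_simps)
      have "W \<le> norm (Y a - Z a) + norm ((Y sm - Z sm) - (Y a - Z a))"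
        unfolding W_def u_def by (rule norm_triangle_sub)
      moreover have "norm (Y a - Z a) \<le> B" using IH ab BPhi unfolding u_def by auto
      ultimately show ?thesis using I by linarith
    qed
    have W1: "W \<le> B * exp (6 * xx)" by (rule step_alg[OF Bp xx(1) xx(3) main])
    have cm: "0 \<le> c * m" "c * m \<le> 1"
    proof -
      show "0 \<le> c * m" using cp m by simp
      have "c * m \<le> c * (1 / c)" using cp m tau(4) by (intro mult_left_mono) auto
      then show "c * m \<le> 1" using cp by simp
    qed
    have x6: "6 * xx \<le> lam * (1 - exp (- (c * m)))"
    proof -
      have "6 * xx \<le> 6 * (C * (2 * lam / \<mu>) * m)" using xx(2) by simp
      also have "\<dots> = lam * (c * m / 2)" unfolding c_def using mu by (simp add: field_simps)
      also have "\<dots> \<le> lam * (1 - exp (- (c * m)))"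
        using exp_bound[OF cm] lamL Lp by (intro mult_left_mono) auto
      finally show ?thesis .
    qed
    have "B * exp (6 * xx) \<le> exp (- lam) * exp (lam * (1 - exp (- (c * m))))"
      unfolding B_def using x6 by simp
    also have "\<dots> = exp (- (lam * exp (- (c * m))))" by (simp add: exp_add[symmetric] algebra_simps)
    also have "lam * exp (- (c * m)) = lam0 * exp (- c * A bb)"
    proof -
      have "A bb = A a + m" unfolding m_def using Acomb[OF ab(1-3)] .
      then show ?thesis unfolding lam_def by (simp add: exp_add[symmetric] algebra_simps)
    qed
    finally have W2: "W \<le> \<Phi> (A bb)" using W1 unfolding \<Phi>_def by simp
    have "A a \<le> A bb" using Acomb[OF ab(1-3)] wI[OF ab(1-3)] by auto
    then have PP: "\<Phi> (A a) \<le> \<Phi> (A bb)" by (rule Phi_mono)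
    show ?case unfolding bb_def[symmetric]
    proof
      fix s assume s: "s \<in> {0..bb}"
      show "u s \<le> \<Phi> (A bb)"
      proof (cases "s \<le> a")
        case True
        then show ?thesis using IH s PP by force
      next
        case False
        then have "s \<in> {a..bb}" using s by auto
        then show ?thesis using sm(2) W2 unfolding W_def by force
      qed
    qed
  qed
  show ?thesis
  proof
    fix t assume t: "t \<in> {0..T}"
    define i where "i = nat \<lceil>T / \<tau>\<rceil>"
    have "T / \<tau> \<le> real i" unfolding i_def by linarith
    then have "T \<le> real i * \<tau>" using tau(1) by (simp add: field_simps)
    then have gi: "g i = T" unfolding g_def by simp
    have "norm (Y t - Z t) = u t" unfolding u_def ..
    also have "\<dots> \<le> \<Phi> (A T)" using claim[of i] t gi by auto
    also have "\<dots> \<le> \<Phi> K" using AK[of T] T by (intro Phi_mono) auto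
    also have "\<Phi> K = exp (- \<Lambda>)" unfolding \<Phi>_def lam0_def by (simp add: exp_minus)
    finally show "norm (Y t - Z t) \<le> exp (- \<Lambda>)" .
  qed
qed



theorem lemma3p4:
  fixes \<sigma> :: "real^'d \<Rightarrow> real^'m^'d" and b :: "real^'d \<Rightarrow> real^'d"
    and x :: "real^'d" and T :: real and C \<mu> \<alpha> :: real
    and X :: "(real \<Rightarrow> real^'m) \<Rightarrow> real \<Rightarrow> real^'d"
    and Xn :: "nat \<Rightarrow> (real \<Rightarrow> real^'m) \<Rightarrow> real \<Rightarrow> real^'d"
  assumes \<sigma>_bdd: "bounded (range \<sigma>)" and \<sigma>_cont: "continuous_on UNIV \<sigma>"
    and b_bdd: "bounded (range b)" and b_cont: "continuous_on UNIV b"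
    and C_pos: "C > 0" and \<mu>_pos: "\<mu> > 0"
    and \<sigma>_reg: "\<And>(N::nat) y z. real N > exp 1 \<Longrightarrow> norm y \<le> real N \<Longrightarrow> norm z \<le> real N \<Longrightarrow>
        norm (\<sigma> y - \<sigma> z) \<le> C * sqrt (ln (real N)) * norm (y - z) + C * ln (real N) / real N powr \<mu>"
    and b_reg: "\<And>(N::nat) y z. real N > exp 1 \<Longrightarrow> norm y \<le> real N \<Longrightarrow> norm z \<le> real N \<Longrightarrow>
        norm (b y - b z) \<le> C * ln (real N) * norm (y - z) + C * ln (real N) / real N powr \<mu>"
    and T_pos: "T > 0" and \<alpha>_pos: "\<alpha> > 0"
    and X_sol: "\<And>h. C0 T h \<Longrightarrow> energy T h < \<infinity> \<Longrightarrow> solves_ode \<sigma> b x T h (X h)"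
    and Xn_sol: "\<And>n h. C0 T h \<Longrightarrow> energy T h < \<infinity> \<Longrightarrow> solves_euler \<sigma> b x T n h (Xn n h)"
  shows "\<forall>\<epsilon>>0. \<exists>N. \<forall>n\<ge>N. \<forall>h. C0 T h \<and> energy T h \<le> ennreal \<alpha> \<longrightarrow>
            (\<forall>t\<in>{0..T}. norm (Xn n h t - X h t) \<le> \<epsilon>)"
proof (intro allI impI)
  fix \<epsilon> :: real assume ep: "\<epsilon> > 0"
  obtain Ms where Ms: "\<And>y. norm (\<sigma> y) \<le> Ms"
    using \<sigma>_bdd unfolding bounded_pos by auto
  obtain Mb where Mb: "\<And>y. norm (b y) \<le> Mb"
    using b_bdd unfolding bounded_pos by auto
  have Ms0: "0 \<le> Ms" using Ms[of 0] norm_ge_zero order_trans by blast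
  have Mb0: "0 \<le> Mb" using Mb[of 0] norm_ge_zero order_trans by blast
  define R where "R = norm x + Ms * sqrt (T * \<alpha>) + Mb * T"
  define K where "K = sqrt (T * \<alpha>) + T"
  define c where "c = 24 * C / \<mu>"
  define \<Lambda> where "\<Lambda> = \<mu> * (1 + ln (R + 3)) + \<bar>ln \<epsilon>\<bar>"
  define lam0 where "lam0 = \<Lambda> * exp (c * K)"
  define mmax where "mmax = min (\<mu> / (4 * C * lam0)) (1 / c)"
  define \<tau> where "\<tau> = min (mmax / 2) (mmax\<^sup>2 / (4 * \<alpha>))"
  have R0: "0 \<le> R" unfolding R_def using Ms0 Mb0 T_pos \<alpha>_pos by simp
  have cp: "c > 0" unfolding c_def using C_pos \<mu>_pos by simp
  have "ln (R + 3) > 0" using R0 by simp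
  then have L1: "\<mu> * (1 + ln (R + 3)) > 0" using \<mu>_pos by (intro mult_pos_pos) auto
  have Lam: "\<Lambda> \<ge> \<mu> * (1 + ln (R + 3))" unfolding \<Lambda>_def by simp
  have Lp: "\<Lambda> > 0" using L1 Lam by linarith
  have l0p: "lam0 > 0" unfolding lam0_def using Lp by simp
  have mmp: "mmax > 0" unfolding mmax_def using C_pos \<mu>_pos l0p cp by simp
  have taup: "\<tau> > 0" unfolding \<tau>_def using mmp \<alpha>_pos by simp
  have tau2: "sqrt (\<tau> * \<alpha>) + \<tau> \<le> mmax"
  proof -
    have "\<tau> * \<alpha> \<le> mmax\<^sup>2 / (4 * \<alpha>) * \<alpha>" unfolding \<tau>_def using \<alpha>_pos by (intro mult_right_mono) auto
    also have "\<dots> = (mmax / 2)\<^sup>2" using \<alpha>_pos by (simp add: power2_eq_square field_simps)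
    finally have "sqrt (\<tau> * \<alpha>) \<le> sqrt ((mmax / 2)\<^sup>2)" by (rule real_sqrt_le_mono)
    then have "sqrt (\<tau> * \<alpha>) \<le> mmax / 2" using mmp by simp
    moreover have "\<tau> \<le> mmax / 2" unfolding \<tau>_def by simp
    ultimately show ?thesis by linarith
  qed
  have tau3: "mmax \<le> \<mu> / (4 * C * lam0)" "mmax \<le> 1 / c" unfolding mmax_def by auto
  have lim: "(\<lambda>n. Ms * sqrt (\<alpha> / 2 ^ n) + Mb / 2 ^ n) \<longlonglongrightarrow> 0"
  proof -
    have a: "(\<lambda>n. \<alpha> / 2 ^ n) \<longlonglongrightarrow> 0" by (rule LIMSEQ_divide_realpow_zero) simp
    have "(\<lambda>n. sqrt (\<alpha> / 2 ^ n)) \<longlonglongrightarrow> sqrt 0" by (rule tendsto_real_sqrt[OF a])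
    then have s: "(\<lambda>n. sqrt (\<alpha> / 2 ^ n)) \<longlonglongrightarrow> 0" by simp
    have m: "(\<lambda>n. Mb / 2 ^ n) \<longlonglongrightarrow> 0" by (rule LIMSEQ_divide_realpow_zero) simp
    show ?thesis using tendsto_add_zero[OF tendsto_mult_right_zero[OF s, of Ms] m] by simp
  qed
  have "exp (- lam0) > 0" by simp
  from order_tendstoD(2)[OF lim this]
  obtain N0 where N0: "\<And>n. n \<ge> N0 \<Longrightarrow> Ms * sqrt (\<alpha> / 2 ^ n) + Mb / 2 ^ n < exp (- lam0)"
    unfolding eventually_sequentially by blast
  have epL: "exp (- \<Lambda>) \<le> \<epsilon>"
  proof -
    have "- \<Lambda> \<le> ln \<epsilon>" unfolding \<Lambda>_def using L1 by linarith
    then have "exp (- \<Lambda>) \<le> exp (ln \<epsilon>)" by simp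
    then show ?thesis using ep by simp
  qed
  show "\<exists>N. \<forall>n\<ge>N. \<forall>h. C0 T h \<and> energy T h \<le> ennreal \<alpha> \<longrightarrow> (\<forall>t\<in>{0..T}. norm (Xn n h t - X h t) \<le> \<epsilon>)"
  proof (intro exI[of _ N0] allI impI)
    fix n and h :: "real \<Rightarrow> real^'m" assume n: "n \<ge> N0" and hh: "C0 T h \<and> energy T h \<le> ennreal \<alpha>"
    then have h: "C0 T h" and en: "energy T h \<le> ennreal \<alpha>" by auto
    have enf: "energy T h < \<infinity>" using le_less_trans[OF en ennreal_less_top] by (metis infinity_ennreal_def)
    have sY: "\<And>t. t \<in> {0..T} \<Longrightarrow> ((\<lambda>s. \<sigma> (Xn n h (phi n s)) *v hdot T h s + b (Xn n h (phi n s))) has_integral (Xn n h t - x)) {0..t}"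
      using Xn_sol[OF h enf, of n] unfolding solves_euler_def by blast
    have sZ: "\<And>t. t \<in> {0..T} \<Longrightarrow> ((\<lambda>s. \<sigma> (X h s) *v hdot T h s + b (X h s)) has_integral (X h t - x)) {0..t}"
      using X_sol[OF h enf] unfolding solves_ode_def by blast
    have "\<forall>t\<in>{0..T}. norm (Xn n h t - X h t) \<le> exp (- \<Lambda>)"
      by (rule core[OF T_pos C_pos \<mu>_pos \<alpha>_pos h en Ms Mb \<sigma>_reg b_reg sY sZ R_def K_def c_def Lam lam0_def
            taup tau2 tau3 less_imp_le[OF N0[OF n]]])
    then show "\<forall>t\<in>{0..T}. norm (Xn n h t - X h t) \<le> \<epsilon>" using epL by force
  qed
qed


end
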